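(* Fix $\delta\in(0,1/2)$ and let $s=s(n)=\lfloor(1/2-\delta)n\rfloor$. Let $k=k(n)$ and $m=m(n)$ satisfy $k=o(\sqrt n)$ and $(1/2+\delta)^k m/n\to\infty$. Let $C_1,\dots,C_m$ be independent uniformly random $k$-clauses on the variables $x_1,\dots,x_n$. Then for every fixed $\zeta>0$, $$\Pr\Big(\big|m_S-(1/2+\delta)^k m\big|\le \zeta (1/2+\delta)^k m\ \text{ for all } S\subseteq[n] \text{ with } |S|=s\Big)\to 1 \quad (n\to\infty).$$
   Context: A uniformly random $k$-clause on $x_1,\dots,x_n$ is obtained by choosing a $k$-subset $K\subseteq[n]$ (its support) uniformly at random and a vector $g\in\{0,1\}^K$ uniformly at random; the clause is the Boolean function $C(x)=1$ iff $x_j=g_j$ for some $j\in K$ (an OR of $k$ literals on $k$ distinct variables). A clause $C_i$ misses $S\subseteq[n]$ if its support is contained in $[n]\setminus S$. For $S\subseteq[n]$, $m_S=|\{i\in[m]: C_i \text{ misses } S\}|$. *)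

theory Defs
  imports "HOL-Probability.Probability" "HOL-Library.Landau_Symbols"
begin

text \<open>A k-clause on variables x_1..x_n is given by its support K (a k-subset of {1..n})
  and a sign vector g in {0,1}^K (booleans). The clause is the Boolean function below.\<close>

definition kclauses :: "nat \<Rightarrow> nat \<Rightarrow> (nat set \<times> (nat \<Rightarrow> bool)) set" where
  "kclauses n k = {(K, g). K \<subseteq> {1..n} \<and> card K = k \<and> g \<in> K \<rightarrow>\<^sub>E (UNIV :: bool set)}"

definition clause_eval :: "nat set \<times> (nat \<Rightarrow> bool) \<Rightarrow> (nat \<Rightarrow> bool) \<Rightarrow> bool" where
  "clause_eval C x \<longleftrightarrow> (\<exists>j\<in>fst C. x j = snd C j)"

definition misses :: "nat \<Rightarrow> nat set \<times> (nat \<Rightarrow> bool) \<Rightarrow> nat set \<Rightarrow> bool" where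
  "misses n C S \<longleftrightarrow> fst C \<subseteq> {1..n} - S"

definition mS :: "nat \<Rightarrow> nat \<Rightarrow> (nat \<Rightarrow> nat set \<times> (nat \<Rightarrow> bool)) \<Rightarrow> nat set \<Rightarrow> nat" where
  "mS n m Cs S = card {i \<in> {1..m}. misses n (Cs i) S}"

text \<open>m independent uniformly random k-clauses = uniform distribution on m-tuples of k-clauses.\<close>
definition random_formula :: "nat \<Rightarrow> nat \<Rightarrow> nat \<Rightarrow> (nat \<Rightarrow> nat set \<times> (nat \<Rightarrow> bool)) pmf" where
  "random_formula n k m = pmf_of_set ({1..m} \<rightarrow>\<^sub>E kclauses n k)"

end

theory Submission imports Defs begin

lemma mgf_sum:
  fixes I :: "'i set" and A :: "'a set" and t :: real
  assumes fI: "finite I" and fA: "finite A"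
  shows "(\<Sum>f\<in>PiE I (\<lambda>_. A). exp (t * real (card {i\<in>I. P (f i)})))
         = (real (card A) + (exp t - 1) * real (card {a\<in>A. P a})) ^ card I"
proof -
  have 1: "exp (t * real (card {i\<in>I. P (f i)})) = (\<Prod>i\<in>I. (if P (f i) then exp t else 1))" for f
  proof -
    have "(\<Prod>i\<in>I. (if P (f i) then exp t else 1)) = (\<Prod>i\<in>{i\<in>I. P (f i)}. exp t)"
      by (rule prod.inter_filter[OF fI, symmetric])
    also have "\<dots> = exp t ^ card {i\<in>I. P (f i)}" by simp
    also have "\<dots> = exp (t * real (card {i\<in>I. P (f i)}))"
      by (metis exp_of_nat_mult mult.commute)
    finally show ?thesis by simp
  qed
  have "(\<Sum>f\<in>PiE I (\<lambda>_. A). exp (t * real (card {i\<in>I. P (f i)})))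
      = (\<Sum>f\<in>PiE I (\<lambda>_. A). \<Prod>i\<in>I. (if P (f i) then exp t else 1))"
    using 1 by simp
  also have "\<dots> = (\<Prod>i\<in>I. \<Sum>a\<in>A. (if P a then exp t else 1))"
    by (rule prod_sum_PiE[symmetric]) (use fI fA in auto)
  also have "\<dots> = (\<Sum>a\<in>A. (if P a then exp t else 1)) ^ card I" by simp
  also have "(\<Sum>a\<in>A. (if P a then exp t else (1::real))) = (\<Sum>a\<in>A. 1 + (if P a then exp t - 1 else 0))"
    by (intro sum.cong) auto
  also have "\<dots> = real (card A) + (\<Sum>a\<in>A. (if P a then exp t - 1 else 0))"
    by (simp add: sum.distrib)
  also have "(\<Sum>a\<in>A. (if P a then exp t - 1 else 0)) = (\<Sum>a\<in>{a\<in>A. P a}. exp t - 1)"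
    by (rule sum.inter_filter[OF fA, symmetric])
  also have "\<dots> = (exp t - 1) * real (card {a\<in>A. P a})" by simp
  finally show ?thesis .
qed

lemma chernoff_gen:
  fixes I :: "'i set" and A :: "'a set" and t x :: real and P :: "'a \<Rightarrow> bool"
  assumes fI: "finite I" and fA: "finite A" and ne: "A \<noteq> {}"
  defines "p \<equiv> real (card {a\<in>A. P a}) / real (card A)"
  shows "measure_pmf.prob (pmf_of_set (PiE I (\<lambda>_. A))) {f. t * x \<le> t * real (card {i\<in>I. P (f i)})}
    \<le> exp (real (card I) * p * (exp t - 1) - t * x)"
proof -
  define U where "U = PiE I (\<lambda>_. A)"
  define X where "X f = real (card {i\<in>I. P (f i)})" for f
  define E where "E = {f. t * x \<le> t * X f}"
  have fU: "finite U" unfolding U_def using fI fA by (simp add: finite_PiE)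
  have neU: "U \<noteq> {}" unfolding U_def using ne by (simp add: PiE_eq_empty_iff)
  have cA: "real (card A) > 0" using fA ne by (simp add: card_gt_0_iff)
  have cU: "real (card U) = real (card A) ^ card I" unfolding U_def using fI by (simp add: card_PiE)
  have p01: "0 \<le> p" "p \<le> 1" unfolding p_def using cA fA
    by (auto simp: divide_le_eq_1 card_mono)
  have "real (card (U \<inter> E)) * exp (t * x) = (\<Sum>f\<in>U \<inter> E. exp (t * x))" by simp
  also have "\<dots> \<le> (\<Sum>f\<in>U \<inter> E. exp (t * X f))"
    by (intro sum_mono) (auto simp: E_def)
  also have "\<dots> \<le> (\<Sum>f\<in>U. exp (t * X f))"
    by (intro sum_mono2) (use fU in auto)
  also have "\<dots> = (real (card A) + (exp t - 1) * real (card {a\<in>A. P a})) ^ card I"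
    unfolding U_def X_def by (rule mgf_sum[OF fI fA])
  also have "\<dots> = (real (card A) * (1 + (exp t - 1) * p)) ^ card I"
  proof -
    have "real (card A) + (exp t - 1) * real (card {a\<in>A. P a}) = real (card A) * (1 + (exp t - 1) * p)"
      using cA by (simp add: p_def field_simps)
    thus ?thesis by simp
  qed
  also have "\<dots> = real (card U) * (1 + (exp t - 1) * p) ^ card I"
    by (simp add: cU power_mult_distrib)
  finally have key: "real (card (U \<inter> E)) * exp (t * x) \<le> real (card U) * (1 + (exp t - 1) * p) ^ card I" .
  have cUp: "real (card U) > 0" using fU neU by (simp add: card_gt_0_iff)
  have "measure_pmf.prob (pmf_of_set U) E = real (card (U \<inter> E)) / real (card U)"
    using fU neU by (simp add: measure_pmf_of_set)
  also have "\<dots> \<le> (1 + (exp t - 1) * p) ^ card I / exp (t * x)"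
    using key cUp by (simp add: field_simps)
  also have "(1 + (exp t - 1) * p) ^ card I \<le> exp ((exp t - 1) * p) ^ card I"
  proof (rule power_mono)
    show "1 + (exp t - 1) * p \<le> exp ((exp t - 1) * p)" by (rule exp_ge_add_one_self)
    have "0 \<le> (1 - p) + exp t * p" using p01 by (simp add: mult_nonneg_nonneg)
    thus "0 \<le> 1 + (exp t - 1) * p" by (simp add: algebra_simps)
  qed
  hence "(1 + (exp t - 1) * p) ^ card I / exp (t * x) \<le> exp ((exp t - 1) * p) ^ card I / exp (t * x)"
    by (simp add: divide_right_mono)
  also have "\<dots> = exp (real (card I) * p * (exp t - 1) - t * x)"
  proof -
    have "exp ((exp t - 1) * p) ^ card I = exp (real (card I) * p * (exp t - 1))"
      by (simp add: exp_of_nat_mult[symmetric] algebra_simps)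
    thus ?thesis by (simp add: exp_diff)
  qed
  finally show ?thesis unfolding U_def E_def X_def .
qed

lemma exp_neg_bound:
  fixes u :: real assumes "0 \<le> u" shows "exp (- u) \<le> 1 - u + u\<^sup>2"
proof -
  have "1 + u \<le> exp u" by (rule exp_ge_add_one_self)
  hence "exp (- u) \<le> 1 / (1 + u)" using assms
    by (simp add: exp_minus field_simps)
  also have "\<dots> \<le> 1 - u + u\<^sup>2"
    using assms by (simp add: field_simps power2_eq_square)
  finally show ?thesis .
qed

lemma chernoff_tails:
  fixes I :: "'i set" and A :: "'a set" and \<epsilon> :: real and P :: "'a \<Rightarrow> bool"
  assumes fI: "finite I" and fA: "finite A" and ne: "A \<noteq> {}" and e: "0 < \<epsilon>" "\<epsilon> \<le> 1"
  defines "\<mu> \<equiv> real (card I) * (real (card {a\<in>A. P a}) / real (card A))"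
  shows "measure_pmf.prob (pmf_of_set (PiE I (\<lambda>_. A))) {f. (1 + \<epsilon>) * \<mu> \<le> real (card {i\<in>I. P (f i)})}
    \<le> exp (- (\<mu> * \<epsilon>\<^sup>2 / 4))"
    and "measure_pmf.prob (pmf_of_set (PiE I (\<lambda>_. A))) {f. real (card {i\<in>I. P (f i)}) \<le> (1 - \<epsilon>) * \<mu>}
    \<le> exp (- (\<mu> * \<epsilon>\<^sup>2 / 4))"
proof -
  define p where "p = real (card {a\<in>A. P a}) / real (card A)"
  have mu: "\<mu> = real (card I) * p" unfolding \<mu>_def p_def ..
  have mu0: "0 \<le> \<mu>" unfolding \<mu>_def by simp
  define M where "M = pmf_of_set (PiE I (\<lambda>_. A))"
  let ?X = "\<lambda>f. real (card {i\<in>I. P (f i)})"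
  define t where "t = \<epsilon> / 2"
  have t: "0 < t" "t \<le> 1" using e by (auto simp: t_def)
  have "measure_pmf.prob M {f. (1 + \<epsilon>) * \<mu> \<le> ?X f} \<le> measure_pmf.prob M {f. t * ((1 + \<epsilon>) * \<mu>) \<le> t * ?X f}"
    by (rule measure_pmf.finite_measure_mono) (use t in auto)
  also have "\<dots> \<le> exp (real (card I) * p * (exp t - 1) - t * ((1 + \<epsilon>) * \<mu>))"
    unfolding M_def p_def by (rule chernoff_gen[OF fI fA ne])
  also have "\<dots> \<le> exp (- (\<mu> * \<epsilon>\<^sup>2 / 4))"
  proof -
    have "exp t - 1 \<le> t + t\<^sup>2" using exp_bound[of t] t by simp
    hence "\<mu> * (exp t - 1) \<le> \<mu> * (t + t\<^sup>2)" using mu0 by (rule mult_left_mono)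
    moreover have "\<mu> * (t + t\<^sup>2) - t * ((1 + \<epsilon>) * \<mu>) = - (\<mu> * \<epsilon>\<^sup>2 / 4)"
      by (simp add: t_def power2_eq_square field_simps)
    ultimately show ?thesis unfolding mu[symmetric] by simp
  qed
  finally show "measure_pmf.prob (pmf_of_set (PiE I (\<lambda>_. A))) {f. (1 + \<epsilon>) * \<mu> \<le> ?X f}
    \<le> exp (- (\<mu> * \<epsilon>\<^sup>2 / 4))" unfolding M_def .
  have "measure_pmf.prob M {f. ?X f \<le> (1 - \<epsilon>) * \<mu>} \<le> measure_pmf.prob M {f. (-t) * ((1 - \<epsilon>) * \<mu>) \<le> (-t) * ?X f}"
    by (rule measure_pmf.finite_measure_mono) (use t in auto)
  also have "\<dots> \<le> exp (real (card I) * p * (exp (-t) - 1) - (-t) * ((1 - \<epsilon>) * \<mu>))"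
    unfolding M_def p_def by (rule chernoff_gen[OF fI fA ne])
  also have "\<dots> \<le> exp (- (\<mu> * \<epsilon>\<^sup>2 / 4))"
  proof -
    have "exp (-t) - 1 \<le> - t + t\<^sup>2" using exp_neg_bound[of t] t by simp
    hence "\<mu> * (exp (-t) - 1) \<le> \<mu> * (- t + t\<^sup>2)" using mu0 by (rule mult_left_mono)
    moreover have "\<mu> * (- t + t\<^sup>2) - (-t) * ((1 - \<epsilon>) * \<mu>) = - (\<mu> * \<epsilon>\<^sup>2 / 4)"
      by (simp add: t_def power2_eq_square field_simps)
    ultimately show ?thesis unfolding mu[symmetric] by simp
  qed
  finally show "measure_pmf.prob (pmf_of_set (PiE I (\<lambda>_. A))) {f. ?X f \<le> (1 - \<epsilon>) * \<mu>}
    \<le> exp (- (\<mu> * \<epsilon>\<^sup>2 / 4))" unfolding M_def .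
qed

definition kcl :: "nat set \<Rightarrow> nat \<Rightarrow> (nat set \<times> (nat \<Rightarrow> bool)) set" where
  "kcl X k = {(K, g). K \<subseteq> X \<and> card K = k \<and> g \<in> K \<rightarrow>\<^sub>E (UNIV :: bool set)}"

lemma card_kcl:
  assumes "finite X" shows "card (kcl X k) = (card X choose k) * 2 ^ k"
proof -
  have eq: "kcl X k = Sigma {K. K \<subseteq> X \<and> card K = k} (\<lambda>K. K \<rightarrow>\<^sub>E (UNIV :: bool set))"
    unfolding kcl_def by auto
  have fin: "finite {K. K \<subseteq> X \<and> card K = k}" using assms by simp
  have "card (kcl X k) = (\<Sum>K\<in>{K. K \<subseteq> X \<and> card K = k}. card (K \<rightarrow>\<^sub>E (UNIV :: bool set)))"
    unfolding eq by (rule card_SigmaI) (use fin assms in \<open>auto intro!: finite_PiE dest: finite_subset\<close>)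
  also have "\<dots> = (\<Sum>K\<in>{K. K \<subseteq> X \<and> card K = k}. 2 ^ k)"
  proof (intro sum.cong refl)
    fix K assume K: "K \<in> {K. K \<subseteq> X \<and> card K = k}"
    hence "finite K" using assms finite_subset by auto
    thus "card (K \<rightarrow>\<^sub>E (UNIV :: bool set)) = 2 ^ k" using K by (simp add: card_PiE)
  qed
  also have "\<dots> = (card X choose k) * 2 ^ k" using assms by (simp add: n_subsets)
  finally show ?thesis .
qed

lemma kclauses_kcl: "kclauses n k = kcl {1..n} k"
  unfolding kclauses_def kcl_def ..

lemma misses_kcl: "{C \<in> kclauses n k. misses n C S} = kcl ({1..n} - S) k"
  unfolding kclauses_def kcl_def misses_def by auto

lemma binom_prod: "real (x choose k) = (\<Prod>i=0..<k. real x - real i) / fact k"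
  by (simp add: binomial_gbinomial gbinomial_prod_rev)

lemma binom_ratio:
  assumes "k \<le> a" "a \<le> n"
  shows "real (a choose k) * real n ^ k \<le> real (n choose k) * real a ^ k"
    and "real (n choose k) * (real a - real k) ^ k \<le> real (a choose k) * real n ^ k"
proof -
  have "(\<Prod>i=0..<k. (real a - real i) * real n) \<le> (\<Prod>i=0..<k. (real n - real i) * real a)"
  proof (rule prod_mono)
    fix i assume "i \<in> {0..<k}"
    hence "i < k" by simp
    moreover have "real a * real i \<le> real n * real i" using assms by (intro mult_right_mono) auto
    ultimately show "0 \<le> (real a - real i) * real n \<and> (real a - real i) * real n \<le> (real n - real i) * real a"
      using assms by (auto simp: algebra_simps)
  qed
  hence "(\<Prod>i=0..<k. real a - real i) * real n ^ k \<le> (\<Prod>i=0..<k. real n - real i) * real a ^ k"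
    by (simp add: prod.distrib)
  thus "real (a choose k) * real n ^ k \<le> real (n choose k) * real a ^ k"
    unfolding binom_prod by (simp add: divide_right_mono)
  have "(\<Prod>i=0..<k. (real n - real i) * (real a - real k)) \<le> (\<Prod>i=0..<k. (real a - real i) * real n)"
  proof (rule prod_mono)
    fix i assume "i \<in> {0..<k}"
    hence i: "i < k" by simp
    have "real i * (real n - real a + real k) \<le> real k * real n"
      using assms i by (intro mult_mono) auto
    moreover have "0 \<le> (real n - real i) * (real a - real k)" using assms i by (intro mult_nonneg_nonneg) auto
    ultimately    show "0 \<le> (real n - real i) * (real a - real k) \<and> (real n - real i) * (real a - real k) \<le> (real a - real i) * real n"
      using assms i by (auto simp: algebra_simps)
  qed
  hence "(\<Prod>i=0..<k. real n - real i) * (real a - real k) ^ k \<le> (\<Prod>i=0..<k. real a - real i) * real n ^ k"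
    by (simp add: prod.distrib)
  thus "real (n choose k) * (real a - real k) ^ k \<le> real (a choose k) * real n ^ k"
    unfolding binom_prod by (simp add: divide_right_mono)
qed

lemma per_n:
  fixes n k m s :: nat and q \<zeta> :: real
  assumes z: "0 < \<zeta>" and q: "0 < q" and kn: "k \<le> n"
    and pb: "(1 - min \<zeta> 1 / 4) * q ^ k \<le> real (n - s choose k) / real (n choose k)"
            "real (n - s choose k) / real (n choose k) \<le> (1 + min \<zeta> 1 / 4) * q ^ k"
    and ex: "exp (- (3/4 * (q ^ k * real m) * (min \<zeta> 1 / 4)\<^sup>2 / 4)) \<le> (1/4) ^ n"
  shows "measure_pmf.prob (random_formula n k m)
            {Cs. \<forall>S. S \<subseteq> {1..n} \<and> card S = s \<longrightarrow>
               \<bar>real (mS n m Cs S) - q ^ k * real m\<bar> \<le> \<zeta> * q ^ k * real m}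
         \<ge> 1 - 2 * (1/2) ^ n"
proof -
  define z where "z = min \<zeta> 1"
  define \<epsilon> where "\<epsilon> = z / 4"
  define \<mu> where "\<mu> = q ^ k * real m"
  have z01: "0 < z" "z \<le> 1" "z \<le> \<zeta>" using z by (auto simp: z_def)
  have e: "0 < \<epsilon>" "\<epsilon> \<le> 1" using z01 by (auto simp: \<epsilon>_def)
  have mu0: "0 \<le> \<mu>" unfolding \<mu>_def using q by simp
  define A where "A = kclauses n k"
  have cA: "card A = (n choose k) * 2 ^ k" unfolding A_def kclauses_kcl by (simp add: card_kcl)
  have cApos: "card A > 0" using kn by (simp add: cA)
  hence fA: "finite A" and neA: "A \<noteq> {}" using card_gt_0_iff by blast+
  define M where "M = random_formula n k m"
  have M: "M = pmf_of_set (PiE {1..m} (\<lambda>_. A))" unfolding M_def random_formula_def A_def ..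
  define SS where "SS = {S. S \<subseteq> {1..n} \<and> card S = s}"
  define Bad where "Bad S = {Cs. \<not> \<bar>real (mS n m Cs S) - \<mu>\<bar> \<le> \<zeta> * \<mu>}" for S
  define G where "G = {Cs. \<forall>S. S \<subseteq> {1..n} \<and> card S = s \<longrightarrow>
               \<bar>real (mS n m Cs S) - q ^ k * real m\<bar> \<le> \<zeta> * q ^ k * real m}"
  have compl: "UNIV - G = \<Union> (Bad ` SS)"
    unfolding G_def Bad_def SS_def \<mu>_def by (auto simp: mult.assoc)
  have finSS: "finite SS" unfolding SS_def by simp
  have cSS: "real (card SS) \<le> 2 ^ n"
  proof -
    have "card SS \<le> card (Pow {1..n})" by (rule card_mono) (auto simp: SS_def)
    thus ?thesis by (simp add: card_Pow)
  qed
  have badS: "measure_pmf.prob M (Bad S) \<le> 2 * (1/4) ^ n" if S: "S \<in> SS" for S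
  proof -
    define P where "P C = misses n C S" for C
    define p where "p = real (card {a\<in>A. P a}) / real (card A)"
    define \<mu>' where "\<mu>' = real (card {1..m}) * p"
    have "{a\<in>A. P a} = kcl ({1..n} - S) k" unfolding A_def P_def by (rule misses_kcl)
    moreover have "card ({1..n} - S) = n - s" using S unfolding SS_def by (subst card_Diff_subset) (auto intro: finite_subset)
    ultimately have "card {a\<in>A. P a} = (n - s choose k) * 2 ^ k" by (simp add: card_kcl)
    hence p: "p = real (n - s choose k) / real (n choose k)" unfolding p_def cA by simp
    have mu': "\<mu>' = real m * p" unfolding \<mu>'_def by simp
    have lo: "(1 - \<epsilon>) * \<mu> \<le> \<mu>'" and hi: "\<mu>' \<le> (1 + \<epsilon>) * \<mu>"
      using mult_right_mono[OF pb(1), of "real m"] mult_right_mono[OF pb(2), of "real m"]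
      unfolding mu' p \<mu>_def \<epsilon>_def z_def by (auto simp: algebra_simps)
    have X: "mS n m Cs S = card {i\<in>{1..m}. P (Cs i)}" for Cs unfolding mS_def P_def ..
    have sub: "Bad S \<subseteq> {f. (1 + \<epsilon>) * \<mu>' \<le> real (card {i\<in>{1..m}. P (f i)})}
         \<union> {f. real (card {i\<in>{1..m}. P (f i)}) \<le> (1 - \<epsilon>) * \<mu>'}"
    proof
      fix Cs assume "Cs \<in> Bad S"
      hence b: "\<not> \<bar>real (card {i\<in>{1..m}. P (Cs i)}) - \<mu>\<bar> \<le> \<zeta> * \<mu>" unfolding Bad_def X by simp
      have h1: "(1 + \<epsilon>) * \<mu>' \<le> (1 + \<zeta>) * \<mu>"
      proof -
        have "(1 + \<epsilon>) * \<mu>' \<le> (1 + \<epsilon>) * ((1 + \<epsilon>) * \<mu>)" using hi e by (intro mult_left_mono) auto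
        also have "\<dots> = (1 + z/2 + z * z / 16) * \<mu>" by (simp add: \<epsilon>_def field_simps)
        also have "\<dots> \<le> (1 + \<zeta>) * \<mu>"
        proof (rule mult_right_mono[OF _ mu0])
          have "z * z \<le> z * 1" using z01 by (intro mult_left_mono) auto
          thus "1 + z/2 + z * z / 16 \<le> 1 + \<zeta>" using z01 by linarith
        qed
        finally show ?thesis .
      qed
      have h2: "(1 - \<zeta>) * \<mu> \<le> (1 - \<epsilon>) * \<mu>'"
      proof -
        have "(1 - \<zeta>) * \<mu> \<le> (1 - z/2 + z * z / 16) * \<mu>"
        proof (rule mult_right_mono[OF _ mu0])
          have "0 \<le> z * z" by simp
          thus "1 - \<zeta> \<le> 1 - z/2 + z * z / 16" using z01 by linarith
        qed
        also have "\<dots> = (1 - \<epsilon>) * ((1 - \<epsilon>) * \<mu>)" by (simp add: \<epsilon>_def field_simps)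
        also have "\<dots> \<le> (1 - \<epsilon>) * \<mu>'" using lo e by (intro mult_left_mono) auto
        finally show ?thesis .
      qed
      show "Cs \<in> {f. (1 + \<epsilon>) * \<mu>' \<le> real (card {i\<in>{1..m}. P (f i)})}
         \<union> {f. real (card {i\<in>{1..m}. P (f i)}) \<le> (1 - \<epsilon>) * \<mu>'}"
        using b h1 h2 by (auto simp: algebra_simps abs_if split: if_splits)
    qed
    have "measure_pmf.prob M (Bad S) \<le> measure_pmf.prob M ({f. (1 + \<epsilon>) * \<mu>' \<le> real (card {i\<in>{1..m}. P (f i)})}
         \<union> {f. real (card {i\<in>{1..m}. P (f i)}) \<le> (1 - \<epsilon>) * \<mu>'})"
      by (rule measure_pmf.finite_measure_mono[OF sub]) simp
    also have "\<dots> \<le> measure_pmf.prob M {f. (1 + \<epsilon>) * \<mu>' \<le> real (card {i\<in>{1..m}. P (f i)})}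
         + measure_pmf.prob M {f. real (card {i\<in>{1..m}. P (f i)}) \<le> (1 - \<epsilon>) * \<mu>'}"
      by (rule measure_subadditive) simp_all
    also have "\<dots> \<le> exp (- (\<mu>' * \<epsilon>\<^sup>2 / 4)) + exp (- (\<mu>' * \<epsilon>\<^sup>2 / 4))"
      unfolding M \<mu>'_def p_def
      by (intro add_mono chernoff_tails[OF _ fA neA e]) simp_all
    also have "exp (- (\<mu>' * \<epsilon>\<^sup>2 / 4)) \<le> exp (- (3/4 * \<mu> * \<epsilon>\<^sup>2 / 4))"
    proof -
      have "3/4 * \<mu> \<le> (1 - \<epsilon>) * \<mu>" using e z01 mu0 by (intro mult_right_mono) (auto simp: \<epsilon>_def)
      hence "3/4 * \<mu> \<le> \<mu>'" using lo by linarith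
      hence "3/4 * \<mu> * \<epsilon>\<^sup>2 \<le> \<mu>' * \<epsilon>\<^sup>2" by (intro mult_right_mono) auto
      thus ?thesis by simp
    qed
    also have "\<dots> \<le> (1/4) ^ n" using ex unfolding \<mu>_def \<epsilon>_def z_def by simp
    finally show ?thesis by simp
  qed
  have "measure_pmf.prob M (UNIV - G) \<le> (\<Sum>S\<in>SS. measure_pmf.prob M (Bad S))"
    unfolding compl by (rule measure_pmf.finite_measure_subadditive_finite[OF finSS]) auto
  also have "\<dots> \<le> (\<Sum>S\<in>SS. 2 * (1/4) ^ n)" by (intro sum_mono badS)
  also have "\<dots> = real (card SS) * (2 * (1/4) ^ n)" by simp
  also have "\<dots> \<le> 2 ^ n * (2 * (1/4) ^ n)" by (intro mult_right_mono cSS) simp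
  also have "\<dots> = 2 * (1/2) ^ n"
  proof -
    have "(2::real) ^ n * (1/4) ^ n = (1/2) ^ n" by (simp add: power_mult_distrib[symmetric])
    thus ?thesis by (simp add: algebra_simps)
  qed
  finally have "measure_pmf.prob M (UNIV - G) \<le> 2 * (1/2) ^ n" .
  moreover have "measure_pmf.prob M (UNIV - G) = 1 - measure_pmf.prob M G"
    using measure_pmf.prob_compl[of G M] by simp
  ultimately show ?thesis unfolding M_def G_def by simp
qed

lemma ratio_bounds:
  fixes n k a :: nat and q \<eta> :: real
  assumes q: "0 < q" and n: "0 < n" and a1: "q * n \<le> a" and a2: "a \<le> q * n + 1" and an: "a \<le> n"
    and \<eta>: "0 \<le> \<eta>" "\<eta> \<le> 1" and kk: "real k ^ 2 \<le> q * \<eta> / 2 * n"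
  shows "(1 - \<eta>) * q ^ k \<le> real (a choose k) / real (n choose k)"
    and "real (a choose k) / real (n choose k) \<le> (1 + \<eta>) * q ^ k"
proof -
  have kk2: "real k \<le> real k ^ 2" by (cases k) (auto simp: power2_eq_square)
  have "q * \<eta> / 2 * n \<le> q * n" using q \<eta> n by (simp add: field_simps mult_left_le)
  hence kqn: "real k \<le> q * n" using kk kk2 by linarith
  hence ka: "k \<le> a" using a1 by linarith
  have kn: "k \<le> n" using ka an by simp
  have cn: "real (n choose k) > 0" using kn by simp
  have nr: "real n > 0" using n by simp
  define r where "r = real (a choose k) / real (n choose k)"
  have r1: "r * real n ^ k \<le> real a ^ k" using binom_ratio(1)[OF ka an] cn
    unfolding r_def by (simp add: field_simps)
  have r2: "(real a - real k) ^ k \<le> r * real n ^ k" using binom_ratio(2)[OF ka an] cn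
    unfolding r_def by (simp add: field_simps)
  define x where "x = real k / (q * n)"
  have x0: "0 \<le> x" using q n by (simp add: x_def)
  have "real k \<le> q * \<eta> / 2 * n" using kk kk2 by linarith
  hence x\<eta>: "x \<le> \<eta> / 2" using q nr by (simp add: x_def field_simps)
  have "r \<le> (real a / real n) ^ k" using r1 nr by (simp add: field_simps power_divide)
  also have "\<dots> \<le> (q + 1 / n) ^ k" using a2 nr by (intro power_mono) (auto simp: field_simps)
  also have "q + 1 / n = q * (1 + 1 / (q * n))" using q nr by (simp add: field_simps)
  also have "(q * (1 + 1 / (q * n))) ^ k = q ^ k * (1 + 1 / (q * n)) ^ k" by (simp add: power_mult_distrib)
  also have "(1 + 1 / (q * n)) ^ k \<le> exp (1 / (q * n)) ^ k"
    using q nr by (intro power_mono) (auto simp: exp_ge_add_one_self)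
  also have "exp (1 / (q * n)) ^ k = exp x" unfolding x_def by (simp add: exp_of_nat_mult[symmetric])
  also have "exp x \<le> 1 + 2 * x" using x0 x\<eta> \<eta> by (intro real_exp_bound_lemma) auto
  also have "1 + 2 * x \<le> 1 + \<eta>" using x\<eta> by simp
  finally show "r \<le> (1 + \<eta>) * q ^ k" using q by (simp add: mult_left_mono mult.commute)
  have "(1 - \<eta>) * q ^ k \<le> (1 - real k * x) * q ^ k"
  proof (rule mult_right_mono)
    have "real k * x = real k ^ 2 / (q * n)" by (simp add: x_def power2_eq_square)
    also have "\<dots> \<le> \<eta> / 2" using kk q nr by (simp add: field_simps)
    finally show "1 - \<eta> \<le> 1 - real k * x" using \<eta> by linarith
  qed (use q in simp)
  also have "(1 - real k * x) * q ^ k \<le> (1 - x) ^ k * q ^ k"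
    using Bernoulli_inequality[of "- x" k] x0 kqn q nr unfolding mult_le_cancel_right by (simp add: x_def field_simps)
  also have "(1 - x) ^ k * q ^ k = (q - real k / n) ^ k"
  proof -
    have "(1 - x) * q = q - real k / n" using q nr by (simp add: x_def field_simps)
    thus ?thesis by (metis power_mult_distrib)
  qed
  also have "\<dots> \<le> ((real a - real k) / real n) ^ k"
    using a1 kqn nr q by (intro power_mono) (auto simp: field_simps)
  also have "\<dots> \<le> r" using r2 nr by (simp add: field_simps power_divide)
  finally show "(1 - \<eta>) * q ^ k \<le> r" .
qed

theorem lemma3p1:
  fixes \<delta> \<zeta> :: real and k m s :: "nat \<Rightarrow> nat"
  assumes "0 < \<delta>" "\<delta> < 1/2"
    and "\<And>n. s n = nat \<lfloor>(1/2 - \<delta>) * real n\<rfloor>"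
    and "(\<lambda>n. real (k n)) \<in> o(\<lambda>n. sqrt (real n))"
    and "filterlim (\<lambda>n. (1/2 + \<delta>) ^ k n * real (m n) / real n) at_top sequentially"
    and "\<zeta> > 0"
  shows "(\<lambda>n. measure_pmf.prob (random_formula n (k n) (m n))
            {Cs. \<forall>S. S \<subseteq> {1..n} \<and> card S = s n \<longrightarrow>
               \<bar>real (mS n (m n) Cs S) - (1/2 + \<delta>) ^ k n * real (m n)\<bar>
                 \<le> \<zeta> * (1/2 + \<delta>) ^ k n * real (m n)})
         \<longlonglongrightarrow> 1"
proof -
  define q where "q = 1/2 + \<delta>"
  define z where "z = min \<zeta> 1"
  define \<eta> where "\<eta> = z / 4"
  define c where "c = q * \<eta> / 2"
  define L where "L = 256 * ln 4 / (3 * z\<^sup>2)"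
  have q: "0 < q" "q < 1" using assms(1,2) by (auto simp: q_def)
  have z: "0 < z" "z \<le> 1" using assms(6) by (auto simp: z_def)
  have \<eta>: "0 \<le> \<eta>" "\<eta> \<le> 1" using z by (auto simp: \<eta>_def)
  have c: "0 < c" "c \<le> 1" using q z
    by (auto simp: c_def \<eta>_def intro: order.trans[OF mult_left_le_one_le])
  let ?P = "\<lambda>n. measure_pmf.prob (random_formula n (k n) (m n))
            {Cs. \<forall>S. S \<subseteq> {1..n} \<and> card S = s n \<longrightarrow>
               \<bar>real (mS n (m n) Cs S) - (1/2 + \<delta>) ^ k n * real (m n)\<bar>
                 \<le> \<zeta> * (1/2 + \<delta>) ^ k n * real (m n)}"
  have ev1: "eventually (\<lambda>n. norm (real (k n)) \<le> sqrt c * norm (sqrt (real n))) sequentially"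
    by (rule landau_o.smallD[OF assms(4)]) (use c in simp)
  have ev2: "eventually (\<lambda>n. L \<le> (1/2 + \<delta>) ^ k n * real (m n) / real n) sequentially"
    using assms(5) unfolding filterlim_at_top by blast
  have ev3: "eventually (\<lambda>n. 1 \<le> n) sequentially" by (rule eventually_ge_at_top)
  have "eventually (\<lambda>n. 1 - 2 * (1/2) ^ n \<le> ?P n) sequentially"
    using ev1 ev2 ev3
  proof eventually_elim
    case (elim n)
    have nr: "real n > 0" using elim(3) by simp
    have kk: "real (k n) ^ 2 \<le> c * real n"
    proof -
      have "real (k n) \<le> sqrt c * sqrt (real n)" using elim(1) by simp
      hence "real (k n) ^ 2 \<le> (sqrt c * sqrt (real n)) ^ 2" by (intro power_mono) auto
      thus ?thesis using c by (simp add: power_mult_distrib)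
    qed
    have kk2: "real (k n) \<le> real (k n) ^ 2" by (cases "k n") (auto simp: power2_eq_square)
    have kn: "k n \<le> n" using kk kk2 c nr
      by (smt (verit) mult_left_le_one_le of_nat_le_iff of_nat_0_le_iff)
    define x where "x = (1/2 - \<delta>) * real n"
    have x0: "0 \<le> x" using assms(1,2) nr by (simp add: x_def)
    have s1: "real (s n) \<le> x" unfolding assms(3) x_def[symmetric] using x0 by linarith
    have s2: "x < real (s n) + 1" unfolding assms(3) x_def[symmetric] using x0 by linarith
    have "x \<le> real n" unfolding x_def using assms(1,2) nr by (intro mult_left_le_one_le) auto
    hence sn: "s n \<le> n" using s1 by linarith
    have a1: "q * real n \<le> real (n - s n)" using s1 sn by (simp add: x_def q_def of_nat_diff algebra_simps)
    have a2: "real (n - s n) \<le> q * real n + 1" using s2 sn by (simp add: x_def q_def of_nat_diff algebra_simps)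
    have rb: "(1 - \<eta>) * q ^ k n \<le> real (n - s n choose k n) / real (n choose k n)"
             "real (n - s n choose k n) / real (n choose k n) \<le> (1 + \<eta>) * q ^ k n"
      using ratio_bounds[of q n "n - s n" \<eta> "k n", OF q(1) _ a1 a2 _ \<eta>] kk nr
      by (auto simp: c_def)
    have ex: "exp (- (3/4 * (q ^ k n * real (m n)) * (min \<zeta> 1 / 4)\<^sup>2 / 4)) \<le> (1/4) ^ n"
    proof -
      have "L \<le> q ^ k n * real (m n) / real n" using elim(2) unfolding q_def .
      hence Ln: "L * real n \<le> q ^ k n * real (m n)" using nr by (simp add: pos_le_divide_eq)
      have z2: "0 < z\<^sup>2" using z by simp
      have "real n * ln 4 = L * real n * (3 * z\<^sup>2 / 256)" using z2 unfolding L_def by (simp add: field_simps)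
      also have "\<dots> \<le> q ^ k n * real (m n) * (3 * z\<^sup>2 / 256)" using Ln z2 by (intro mult_right_mono) auto
      also have "\<dots> = 3/4 * (q ^ k n * real (m n)) * (z / 4)\<^sup>2 / 4" by (simp add: power_divide)
      finally have "real n * ln 4 \<le> 3/4 * (q ^ k n * real (m n)) * (z / 4)\<^sup>2 / 4" .
      hence "exp (- (3/4 * (q ^ k n * real (m n)) * (z / 4)\<^sup>2 / 4)) \<le> exp (- (real n * ln 4))"
        by simp
      also have "exp (- (real n * ln 4)) = (1/4) ^ n"
      proof -
        have "exp (real n * ln 4) = exp (ln 4) ^ n" by (rule exp_of_nat_mult)
        also have "exp (ln (4::real)) = 4" by simp
        finally have e: "exp (real n * ln 4) = (4::real) ^ n" .
        have "exp (- (real n * ln 4)) = inverse ((4::real) ^ n)" by (simp only: exp_minus e)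
        also have "\<dots> = (1/4) ^ n" by (simp add: power_one_over inverse_eq_divide)
        finally show ?thesis .
      qed
      finally show ?thesis by (simp add: z_def)
    qed
    show ?case
      using per_n[where n=n and k="k n" and m="m n" and s="s n" and q=q and \<zeta>=\<zeta>,
          OF assms(6) q(1) kn rb[unfolded \<eta>_def z_def] ex]
      unfolding q_def by simp
  qed
  moreover have "eventually (\<lambda>n. ?P n \<le> 1) sequentially" by simp
  moreover have "(\<lambda>n. 1 - 2 * (1/2::real) ^ n) \<longlonglongrightarrow> 1"
    by (auto intro!: tendsto_eq_intros LIMSEQ_power_zero)
  ultimately show ?thesis by (rule tendsto_sandwich) simp
qed

end
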